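(* Let $\Gamma$ be a $\Bbbk$-algebra and $\sim$ an equivalence relation on $\mathrm{cfs}(\Gamma)$. If $V$ is a strong block module, then for each $B\in\mathrm{cfs}(\Gamma)/{\sim}$ there is a decomposition of $\Gamma$-modules $V=V(B)\oplus V'$ where $\mathfrak mV'=V'$ for all $\mathfrak m\in\mathcal W(B)$ and $\mathfrak mV(B)=0$ for some $\mathfrak m\in\mathcal W(B)$.
   Context: $\mathrm{cfs}(\Gamma)$: maximal two-sided ideals $\mathfrak m$ of $\Gamma$ with $\dim\Gamma/\mathfrak m<\infty$. For a class $B$, $\mathcal W(B)=\{\mathfrak m_1\cdots\mathfrak m_k:k\ge0,\mathfrak m_i\in B\}$; for a $\Gamma$-module $V$, $V(B)=\{v:\mathfrak mv=0$ for some $\mathfrak m\in\mathcal W(B)\}$. $V$ is a strong block module if $V=\bigoplus_BV(B)$ and for each $B$ there is $\mathfrak m\in\mathcal W(B)$ with $\mathfrak mV(B)=0$. *)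

theory Defs
  imports Complex_Main
begin

text \<open>A unital associative k-algebra: the ring structure is the type class ring_1 on 'a,
  the k-vector space structure is given by smul, and multiplication is k-bilinear.\<close>
definition k_algebra :: "('k::field \<Rightarrow> 'a::ring_1 \<Rightarrow> 'a) \<Rightarrow> bool" where
  "k_algebra smul \<longleftrightarrow> vector_space smul \<and>
     (\<forall>c x y. smul c (x * y) = smul c x * y \<and> smul c (x * y) = x * smul c y)"

definition two_sided_ideal :: "'a::ring_1 set \<Rightarrow> bool" where
  "two_sided_ideal I \<longleftrightarrow> 0 \<in> I \<and> (\<forall>x\<in>I. \<forall>y\<in>I. x + y \<in> I) \<and> (\<forall>x\<in>I. - x \<in> I)
     \<and> (\<forall>x\<in>I. \<forall>r. r * x \<in> I \<and> x * r \<in> I)"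

definition maximal_ideal :: "'a::ring_1 set \<Rightarrow> bool" where
  "maximal_ideal m \<longleftrightarrow> two_sided_ideal m \<and> m \<noteq> UNIV \<and>
     (\<forall>J. two_sided_ideal J \<and> m \<subseteq> J \<and> J \<noteq> UNIV \<longrightarrow> J = m)"

text \<open>dim (Gamma / m) < infinity: the quotient is spanned over k by the classes of
  finitely many elements.\<close>
definition finite_codim :: "('k::field \<Rightarrow> 'a::ring_1 \<Rightarrow> 'a) \<Rightarrow> 'a set \<Rightarrow> bool" where
  "finite_codim smul m \<longleftrightarrow> (\<exists>S. finite S \<and> (\<forall>x. \<exists>y \<in> module.span smul S. x - y \<in> m))"

definition cfs :: "('k::field \<Rightarrow> 'a::ring_1 \<Rightarrow> 'a) \<Rightarrow> 'a set set" where
  "cfs smul = {m. maximal_ideal m \<and> finite_codim smul m}"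

definition ideal_gen :: "'a::ring_1 set \<Rightarrow> 'a set" where
  "ideal_gen S = \<Inter>{I. two_sided_ideal I \<and> S \<subseteq> I}"

fun ideal_prod :: "'a::ring_1 set list \<Rightarrow> 'a set" where
  "ideal_prod [] = UNIV"
| "ideal_prod (m # ms) = ideal_gen {x * y | x y. x \<in> m \<and> y \<in> ideal_prod ms}"

definition W :: "'a::ring_1 set set \<Rightarrow> 'a set set" where
  "W B = {ideal_prod ms | ms. set ms \<subseteq> B}"

definition gamma_module :: "('a::ring_1 \<Rightarrow> 'v::ab_group_add \<Rightarrow> 'v) \<Rightarrow> bool" where
  "gamma_module act \<longleftrightarrow>
     (\<forall>a b v. act (a + b) v = act a v + act b v) \<and>
     (\<forall>a v w. act a (v + w) = act a v + act a w) \<and>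
     (\<forall>a b v. act (a * b) v = act a (act b v)) \<and>
     (\<forall>v. act 1 v = v)"

definition submodule :: "('a::ring_1 \<Rightarrow> 'v::ab_group_add \<Rightarrow> 'v) \<Rightarrow> 'v set \<Rightarrow> bool" where
  "submodule act U \<longleftrightarrow> 0 \<in> U \<and> (\<forall>u\<in>U. \<forall>w\<in>U. u + w \<in> U) \<and> (\<forall>a. \<forall>u\<in>U. act a u \<in> U)"

definition ideal_act :: "('a::ring_1 \<Rightarrow> 'v::ab_group_add \<Rightarrow> 'v) \<Rightarrow> 'a set \<Rightarrow> 'v set \<Rightarrow> 'v set" where
  "ideal_act act m U = \<Inter>{T. submodule act T \<and> {act a u | a u. a \<in> m \<and> u \<in> U} \<subseteq> T}"

definition block_part :: "('a::ring_1 \<Rightarrow> 'v::ab_group_add \<Rightarrow> 'v) \<Rightarrow> 'a set set \<Rightarrow> 'v set" where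
  "block_part act B = {v. \<exists>m \<in> W B. \<forall>a \<in> m. act a v = 0}"

definition strong_block_module ::
  "('a::ring_1 \<Rightarrow> 'v::ab_group_add \<Rightarrow> 'v) \<Rightarrow> 'a set set set \<Rightarrow> bool" where
  "strong_block_module act Blocks \<longleftrightarrow>
     (\<forall>v. \<exists>F f. finite F \<and> F \<subseteq> Blocks \<and> (\<forall>B\<in>F. f B \<in> block_part act B) \<and> v = sum f F) \<and>
     (\<forall>F f. finite F \<and> F \<subseteq> Blocks \<and> (\<forall>B\<in>F. f B \<in> block_part act B) \<and> sum f F = 0
        \<longrightarrow> (\<forall>B\<in>F. f B = 0)) \<and>
     (\<forall>B\<in>Blocks. \<exists>m \<in> W B. \<forall>a\<in>m. \<forall>v \<in> block_part act B. act a v = 0)"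

end

theory Submission
  imports Defs
begin

lemma ideal_gen_ideal: "two_sided_ideal (ideal_gen S)"
  unfolding two_sided_ideal_def ideal_gen_def by auto

lemma ideal_gen_sub: "S \<subseteq> ideal_gen S"
  unfolding ideal_gen_def by auto

lemma ideal_prod_ideal: "two_sided_ideal (ideal_prod ms)"
  using ideal_gen_ideal by (cases ms) (auto simp: two_sided_ideal_def)

lemma W_ideal: "m \<in> W B \<Longrightarrow> two_sided_ideal m"
  unfolding W_def using ideal_prod_ideal by auto

definition comax :: "'a::ring_1 set \<Rightarrow> 'a set \<Rightarrow> bool" where
  "comax I J \<longleftrightarrow> (\<exists>i\<in>I. \<exists>j\<in>J. i + j = 1)"

lemma comax_sym: "comax I J \<Longrightarrow> comax J I"
  unfolding comax_def by (metis add.commute)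

lemma comax_max:
  assumes m: "maximal_ideal m" and n: "maximal_ideal n" and ne: "m \<noteq> n"
  shows "comax m n"
proof -
  let ?J = "{i + j | i j. i \<in> m \<and> j \<in> n}"
  have im: "two_sided_ideal m" and inn: "two_sided_ideal n"
    using m n by (auto simp: maximal_ideal_def)
  have J: "two_sided_ideal ?J"
    unfolding two_sided_ideal_def
  proof (intro conjI ballI allI)
    show "0 \<in> ?J" using im inn unfolding two_sided_ideal_def by force
  next
    fix x y assume "x \<in> ?J" "y \<in> ?J"
    then obtain i j i' j' where "x = i + j" "i \<in> m" "j \<in> n" "y = i' + j'" "i' \<in> m" "j' \<in> n" by auto
    then show "x + y \<in> ?J" using im inn unfolding two_sided_ideal_def
      by (intro CollectI exI[of _ "i+i'"] exI[of _ "j+j'"]) (auto simp: algebra_simps)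
  next
    fix x assume "x \<in> ?J"
    then obtain i j where "x = i + j" "i \<in> m" "j \<in> n" by auto
    then show "- x \<in> ?J" using im inn unfolding two_sided_ideal_def
      by (intro CollectI exI[of _ "-i"] exI[of _ "-j"]) (auto simp: algebra_simps)
  next
    fix x r assume "x \<in> ?J"
    then obtain i j where "x = i + j" "i \<in> m" "j \<in> n" by auto
    then show "r * x \<in> ?J" using im inn unfolding two_sided_ideal_def
      by (intro CollectI exI[of _ "r*i"] exI[of _ "r*j"]) (auto simp: algebra_simps)
  next
    fix x r assume "x \<in> ?J"
    then obtain i j where "x = i + j" "i \<in> m" "j \<in> n" by auto
    then show "x * r \<in> ?J" using im inn unfolding two_sided_ideal_def
      by (intro CollectI exI[of _ "i*r"] exI[of _ "j*r"]) (auto simp: algebra_simps)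
  qed
  have mJ: "m \<subseteq> ?J"
  proof
    fix x assume "x \<in> m" then show "x \<in> ?J" using inn unfolding two_sided_ideal_def
      by (intro CollectI exI[of _ x] exI[of _ 0]) auto
  qed
  have nJ: "n \<subseteq> ?J"
  proof
    fix x assume "x \<in> n" then show "x \<in> ?J" using im unfolding two_sided_ideal_def
      by (intro CollectI exI[of _ 0] exI[of _ x]) auto
  qed
  have "?J = UNIV"
  proof (rule ccontr)
    assume "?J \<noteq> UNIV"
    then have "?J = m" using m J mJ unfolding maximal_ideal_def by blast
    then have "n \<subseteq> m" using nJ by auto
    then have "m = n" using n im m unfolding maximal_ideal_def by blast
    then show False using ne by simp
  qed
  then have "(1::'a) \<in> ?J" by simp
  then show ?thesis unfolding comax_def by auto
qed

lemma comax_prod: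
  assumes I: "two_sided_ideal I" and "comax I J" "comax I K"
    and P: "\<forall>x\<in>J. \<forall>y\<in>K. x * y \<in> P"
  shows "comax I P"
proof -
  obtain i j where ij: "i \<in> I" "j \<in> J" "i + j = 1" using assms(2) unfolding comax_def by auto
  obtain i' k where ik: "i' \<in> I" "k \<in> K" "i' + k = 1" using assms(3) unfolding comax_def by auto
  have "1 = (i + j) * (i' + k)" using ij ik by simp
  also have "\<dots> = i * (i' + k) + (j * i' + j * k)" by (simp add: algebra_simps)
  also have "\<dots> = (i + j * i') + j * k" using ik(3) by (simp add: add.assoc)
  finally have e: "(i + j * i') + j * k = 1" by simp
  have "i + j * i' \<in> I" using I ij ik unfolding two_sided_ideal_def by blast
  moreover have "j * k \<in> P" using P ij ik by blast
  ultimately show ?thesis using e unfolding comax_def by blast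
qed

lemma comax_I_prod:
  assumes I: "two_sided_ideal I"
  shows "(\<forall>n\<in>set ns. comax I n) \<Longrightarrow> comax I (ideal_prod ns)"
proof (induction ns)
  case Nil
  then show ?case using I unfolding comax_def two_sided_ideal_def by force
next
  case (Cons a ns)
  show ?case unfolding ideal_prod.simps
  proof (rule comax_prod[OF I, of a "ideal_prod ns"])
    show "comax I a" "comax I (ideal_prod ns)" using Cons by auto
    show "\<forall>x\<in>a. \<forall>y\<in>ideal_prod ns. x * y \<in> ideal_gen {x * y |x y. x \<in> a \<and> y \<in> ideal_prod ns}"
      by (intro ballI, rule subsetD[OF ideal_gen_sub]) blast
  qed
qed

lemma comax_prods:
  assumes "\<forall>m\<in>set ms. \<forall>n\<in>set ns. comax m n"
    and "\<forall>m\<in>set ms. two_sided_ideal m"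
  shows "comax (ideal_prod ms) (ideal_prod ns)"
proof -
  have "\<forall>m\<in>set ms. comax (ideal_prod ns) m"
    using assms comax_I_prod comax_sym by blast
  then show ?thesis using comax_I_prod[OF ideal_prod_ideal] comax_sym by blast
qed

lemma W_comax:
  assumes "m \<in> W B" "n \<in> W C" "B \<inter> C = {}" "B \<subseteq> cfs smul" "C \<subseteq> cfs smul"
  shows "comax m n"
proof -
  obtain ms where ms: "m = ideal_prod ms" "set ms \<subseteq> B" using assms(1) unfolding W_def by auto
  obtain ns where ns: "n = ideal_prod ns" "set ns \<subseteq> C" using assms(2) unfolding W_def by auto
  have "\<forall>x\<in>set ms. \<forall>y\<in>set ns. comax x y"
    using ms ns assms(3-5) comax_max unfolding cfs_def by blast
  moreover have "\<forall>x\<in>set ms. two_sided_ideal x"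
    using ms assms(4) unfolding cfs_def maximal_ideal_def by blast
  ultimately show ?thesis using comax_prods ms ns by blast
qed

theorem mainTheorem17:
  fixes smul :: "'k::field \<Rightarrow> 'a::ring_1 \<Rightarrow> 'a"
    and R :: "('a set \<times> 'a set) set"
    and act :: "'a \<Rightarrow> 'v::ab_group_add \<Rightarrow> 'v"
  assumes "k_algebra smul"
    and "equiv (cfs smul) R"
    and "gamma_module act"
    and "strong_block_module act (cfs smul // R)"
  shows "\<forall>B \<in> cfs smul // R. \<exists>V'.
           submodule act (block_part act B) \<and> submodule act V' \<and>
           block_part act B \<inter> V' = {0} \<and>
           (\<forall>v. \<exists>x \<in> block_part act B. \<exists>y \<in> V'. v = x + y) \<and>
           (\<forall>m \<in> W B. ideal_act act m V' = V') \<and>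
           (\<exists>m \<in> W B. \<forall>a \<in> m. \<forall>v \<in> block_part act B. act a v = 0)"
proof
  let ?Bl = "cfs smul // R"
  have GM: "act (a + b) v = act a v + act b v" "act a (v + w) = act a v + act a w"
    "act (a * b) v = act a (act b v)" "act 1 v = v" for a b v w
    using assms(3) unfolding gamma_module_def by auto
  have act0: "act a 0 = 0" for a
    using GM(2)[of a 0 0] by simp
  have actneg: "act a (- v) = - act a v" for a v
    using GM(2)[of a v "- v"] act0 minus_unique[of "act a v" "act a (- v)"] by simp
  have actsum: "act a (sum f F) = (\<Sum>C\<in>F. act a (f C))" if "finite F" for a f and F :: "'a set set set"
    using that by (induction F rule: finite_induct) (auto simp: act0 GM(2))
  note SB = assms(4)[unfolded strong_block_module_def]
  note H1 = SB[THEN conjunct1]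
  note H2 = SB[THEN conjunct2, THEN conjunct1]
  note H3 = SB[THEN conjunct2, THEN conjunct2]
  obtain M where M0: "\<forall>B\<in>?Bl. M B \<in> W B \<and> (\<forall>a\<in>M B. \<forall>v \<in> block_part act B. act a v = 0)"
    using bchoice[OF H3[unfolded Bex_def]] by blast
  have M: "M B \<in> W B \<and> (\<forall>a\<in>M B. \<forall>v \<in> block_part act B. act a v = 0)" if "B \<in> ?Bl" for B
    using M0 that by blast
  have bpc: "block_part act C = {v. \<forall>a\<in>M C. act a v = 0}" if "C \<in> ?Bl" for C
    using M[OF that] unfolding block_part_def by blast
  have bp0: "0 \<in> block_part act C" for C
    unfolding block_part_def W_def
    by (rule CollectI, rule bexI[of _ UNIV]) (auto simp: act0 intro!: exI[of _ "[]"])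
  have bpadd: "v + w \<in> block_part act C" if "C \<in> ?Bl" "v \<in> block_part act C" "w \<in> block_part act C" for C v w
    using that by (simp add: bpc GM(2))
  have bpneg: "- v \<in> block_part act C" if "C \<in> ?Bl" "v \<in> block_part act C" for C v
    using that by (simp add: bpc actneg)
  have bpact: "act a v \<in> block_part act C" if "C \<in> ?Bl" "v \<in> block_part act C" for C v a
  proof -
    have "two_sided_ideal (M C)" using M[OF that(1)] W_ideal by blast
    then show ?thesis using that by (simp add: bpc GM(3)[symmetric] two_sided_ideal_def)
  qed
  have bpsub: "submodule act (block_part act C)" if "C \<in> ?Bl" for C
    unfolding submodule_def using bp0 bpadd[OF that] bpact[OF that] by blast
  have Bcfs: "C \<subseteq> cfs smul" if "C \<in> ?Bl" for C
    using that Union_quotient[OF assms(2)] by blast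
  have disj: "C \<inter> D = {}" if "C \<in> ?Bl" "D \<in> ?Bl" "C \<noteq> D" for C D
    using quotient_disj[OF assms(2) that(1,2)] that(3) by blast
  fix B assume B: "B \<in> ?Bl"
  define V' where "V' = {v. \<exists>F f. finite F \<and> F \<subseteq> ?Bl - {B} \<and> (\<forall>C\<in>F. f C \<in> block_part act C)
      \<and> (\<forall>C. C \<notin> F \<longrightarrow> f C = 0) \<and> v = sum f F}"
  have V'I: "sum f F \<in> V'" if "finite F" "F \<subseteq> ?Bl - {B}" "\<forall>C\<in>F. f C \<in> block_part act C" for F f
  proof -
    have "sum f F = sum (\<lambda>C. if C \<in> F then f C else 0) F" by simp
    then show ?thesis unfolding V'_def using that
      by (intro CollectI exI[of _ F] exI[of _ "\<lambda>C. if C \<in> F then f C else 0"]) auto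
  qed
  have V'0: "0 \<in> V'" using V'I[of "{}"] by simp
  have V'add: "u + w \<in> V'" if uw: "u \<in> V'" "w \<in> V'" for u w
  proof -
    obtain F1 f1 where 1: "finite F1" "F1 \<subseteq> ?Bl - {B}" "\<forall>C\<in>F1. f1 C \<in> block_part act C"
      "\<forall>C. C \<notin> F1 \<longrightarrow> f1 C = 0" "u = sum f1 F1" using uw(1) unfolding V'_def mem_Collect_eq by (elim exE conjE) blast
    obtain F2 f2 where 2: "finite F2" "F2 \<subseteq> ?Bl - {B}" "\<forall>C\<in>F2. f2 C \<in> block_part act C"
      "\<forall>C. C \<notin> F2 \<longrightarrow> f2 C = 0" "w = sum f2 F2" using uw(2) unfolding V'_def mem_Collect_eq by (elim exE conjE) blast
    have s1: "sum f1 (F1 \<union> F2) = sum f1 F1"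
      by (rule sum.mono_neutral_right) (use 1 2 in auto)
    have s2: "sum f2 (F1 \<union> F2) = sum f2 F2"
      by (rule sum.mono_neutral_right) (use 1 2 in auto)
    have "u + w = sum (\<lambda>C. f1 C + f2 C) (F1 \<union> F2)"
      using s1 s2 1(5) 2(5) by (simp add: sum.distrib)
    moreover have "\<forall>C\<in>F1 \<union> F2. f1 C + f2 C \<in> block_part act C"
    proof
      fix C assume C: "C \<in> F1 \<union> F2"
      then have CB: "C \<in> ?Bl" using 1 2 by auto
      have "f1 C \<in> block_part act C" using 1 C bp0 by (cases "C \<in> F1") auto
      moreover have "f2 C \<in> block_part act C" using 2 C bp0 by (cases "C \<in> F2") auto
      ultimately show "f1 C + f2 C \<in> block_part act C" using bpadd[OF CB] by blast
    qed
    ultimately show ?thesis using V'I[of "F1 \<union> F2"] 1 2 by auto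
  qed
  have V'act: "act a u \<in> V'" if uV: "u \<in> V'" for u a
  proof -
    obtain F f where 1: "finite F" "F \<subseteq> ?Bl - {B}" "\<forall>C\<in>F. f C \<in> block_part act C"
      "u = sum f F" using uV unfolding V'_def mem_Collect_eq by (elim exE conjE) blast
    have "act a u = (\<Sum>C\<in>F. act a (f C))" using 1 actsum by simp
    moreover have "\<forall>C\<in>F. act a (f C) \<in> block_part act C"
    proof
      fix C assume "C \<in> F"
      then show "act a (f C) \<in> block_part act C" using 1(2,3) bpact[of C "f C" a] by blast
    qed
    ultimately show ?thesis using V'I[of F "\<lambda>C. act a (f C)"] 1(1,2) by simp
  qed
  have V'sub: "submodule act V'" unfolding submodule_def using V'0 V'add V'act by blast
  show "\<exists>V'.
           submodule act (block_part act B) \<and> submodule act V' \<and>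
           block_part act B \<inter> V' = {0} \<and>
           (\<forall>v. \<exists>x \<in> block_part act B. \<exists>y \<in> V'. v = x + y) \<and>
           (\<forall>m \<in> W B. ideal_act act m V' = V') \<and>
           (\<exists>m \<in> W B. \<forall>a \<in> m. \<forall>v \<in> block_part act B. act a v = 0)"
  proof (intro exI[of _ V'] conjI)
    show "submodule act (block_part act B)" using bpsub[OF B] .
    show "submodule act V'" using V'sub .
    show "\<exists>m \<in> W B. \<forall>a \<in> m. \<forall>v \<in> block_part act B. act a v = 0" using H3 B by blast
    show "block_part act B \<inter> V' = {0}"
    proof
      show "{0} \<subseteq> block_part act B \<inter> V'" using bp0 V'0 by auto
      show "block_part act B \<inter> V' \<subseteq> {0}"
      proof
        fix v assume v: "v \<in> block_part act B \<inter> V'"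
        then have "v \<in> V'" by simp
        then obtain F f where 1: "finite F" "F \<subseteq> ?Bl - {B}" "\<forall>C\<in>F. f C \<in> block_part act C"
          "v = sum f F" unfolding V'_def mem_Collect_eq by (elim exE conjE) blast
        let ?g = "f(B := - v)"
        have BF: "B \<notin> F" using 1 by auto
        have "sum ?g (insert B F) = - v + sum f F"
        proof -
          have "sum ?g (insert B F) = ?g B + sum ?g F" using 1(1) BF by (rule sum.insert)
          also have "sum ?g F = sum f F" using BF by (intro sum.cong) auto
          finally show ?thesis by simp
        qed
        then have "sum ?g (insert B F) = 0" using 1(4) by simp
        moreover have "\<forall>C\<in>insert B F. ?g C \<in> block_part act C"
          using 1(3) BF bpneg[OF B] v by auto
        moreover have "finite (insert B F)" "insert B F \<subseteq> ?Bl" using 1 B by auto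
        ultimately have "?g B = 0" using H2[rule_format, of "insert B F" ?g] by blast
        then show "v \<in> {0}" by simp
      qed
    qed
    show "\<forall>v. \<exists>x \<in> block_part act B. \<exists>y \<in> V'. v = x + y"
    proof
      fix v
      obtain F f where 1: "finite F" "F \<subseteq> ?Bl" "\<forall>C\<in>F. f C \<in> block_part act C" "v = sum f F"
        using H1[rule_format, of v] by (elim exE conjE) blast
      have y: "sum f (F - {B}) \<in> V'" using 1 by (intro V'I) auto
      show "\<exists>x \<in> block_part act B. \<exists>y \<in> V'. v = x + y"
      proof (cases "B \<in> F")
        case True
        then have "v = f B + sum f (F - {B})" using 1 sum.remove[of F B f] by simp
        moreover have "f B \<in> block_part act B" using 1(3) True by simp
        ultimately show ?thesis using y by blast
      next
        case False
        then have "v = 0 + sum f (F - {B})" using 1 by simp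
        then show ?thesis using y bp0 by blast
      qed
    qed
    show "\<forall>m \<in> W B. ideal_act act m V' = V'"
    proof
      fix m assume m: "m \<in> W B"
      show "ideal_act act m V' = V'"
      proof
        show "ideal_act act m V' \<subseteq> V'"
          unfolding ideal_act_def using V'sub V'act by blast
        show "V' \<subseteq> ideal_act act m V'"
          unfolding ideal_act_def
        proof (rule Inter_greatest)
          fix T assume "T \<in> {T. submodule act T \<and> {act a u |a u. a \<in> m \<and> u \<in> V'} \<subseteq> T}"
          then have T: "submodule act T" "{act a u |a u. a \<in> m \<and> u \<in> V'} \<subseteq> T" by auto
          have comp: "f C \<in> T" if C: "C \<in> ?Bl - {B}" "f C \<in> block_part act C" for C f
          proof -
            have "comax m (M C)"
              using W_comax[OF m, of "M C" C smul] M[of C] C disj[OF B, of C] Bcfs[OF B] Bcfs[of C] by auto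
            then obtain a b where ab: "a \<in> m" "b \<in> M C" "a + b = 1" unfolding comax_def by blast
            have "f C = act (a + b) (f C)" using ab GM(4) by simp
            also have "\<dots> = act a (f C) + act b (f C)" by (rule GM(1))
            also have "act b (f C) = 0" using M[of C] C ab(2) by blast
            also have "act a (f C) + 0 = act a (f C)" by simp
            finally have e: "f C = act a (f C)" .
            have "f C \<in> V'" using V'I[of "{C}" f] C by auto
            then show ?thesis using e T(2) ab(1) by auto
          qed
          show "V' \<subseteq> T"
          proof
            fix v assume "v \<in> V'"
            then obtain F f where 1: "finite F" "F \<subseteq> ?Bl - {B}" "\<forall>C\<in>F. f C \<in> block_part act C"
              "v = sum f F" unfolding V'_def mem_Collect_eq by (elim exE conjE) blast
            have "F \<subseteq> ?Bl - {B} \<longrightarrow> (\<forall>C\<in>F. f C \<in> block_part act C) \<longrightarrow> sum f F \<in> T"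
              using 1(1)
            proof (induction F rule: finite_induct)
              case empty then show ?case using T(1) unfolding submodule_def by simp
            next
              case (insert x F)
              then show ?case using T(1) comp unfolding submodule_def by auto
            qed
            then show "v \<in> T" using 1 by blast
          qed
        qed
      qed
    qed
  qed
qed

end
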